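(* Assume (A1)–(A3). If $m_1<0$, then for every $\theta>0$ there exist $C>0$ and $\delta>0$ such that for all $(i,j)\in\mathbb N\times\mathbb Z$ and $k\in\mathbb N$, \[\mathbb E_{(i,j)}\bigl(\exp(\delta T_1^k)\bigr)\le C\exp(\theta i),\] where $T_1^k=\inf\{n>0: X_1(n)\le\max(k_0-1,k)\}$.
   Context: Let $\mathbb N=\{0,1,2,\dots\}$ and fix an integer $k_0\ge1$. Let $\mu$, $\mu'_j$ ($0\le j<k_0$), $\mu''_i$ ($0\le i<k_0$), $\mu_{ij}$ ($0\le i,j<k_0$) be probability measures on $\mathbb Z^2$. The random walk $Z=(X(n),Y(n))$ on $\mathbb N^2$ has transition probabilities $p((i,j)\to(i',j'))$ equal to $\mu(i'-i,j'-j)$ if $i,j\ge k_0$; $\mu'_j(i'-i,j'-j)$ if $i\ge k_0$, $0\le j<k_0$; $\mu''_i(i'-i,j'-j)$ if $0\le i<k_0$, $j\ge k_0$; $\mu_{ij}(i'-i,j'-j)$ if $0\le i,j<k_0$. Assumptions: (A1) $\mu(a,b)=0$ if $a<-k_0$ or $b<-k_0$; $\mu'_j(a,b)=0$ if $a<-k_0$ or $b<-j$; $\mu''_i(a,b)=0$ if $b<-k_0$ or $a<-i$; $\mu_{ij}(a,b)=0$ if $a<-i$ or $b<-j$. (A2) There are $\delta,\gamma,C>0$ with $\sup_{(i,j)\in\mathbb N^2}\mathbb E_{(i,j)}[\exp(\delta(X(1)-i)+\gamma(Y(1)-j))]\le C$. (A3) $Z_0,Z_1,Z_2,Z$ are irreducible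 on their state spaces. $Z_0$: random walk on $\mathbb Z^2$ with increment law $\mu$; $m_1=\sum a\mu(a,b)$. $Z_1=(X_1,Y_1)$: Markov chain on $\mathbb N\times\mathbb Z$ with transitions $\mu(i'-i,j'-j)$ from $(i,j)$ if $i\ge k_0$ and $\mu''_i(i'-i,j'-j)$ if $0\le i<k_0$; $\mathbb P_{(i,j)},\mathbb E_{(i,j)}$ refer to it started at $(i,j)$. $Z_2$: Markov chain on $\mathbb Z\times\mathbb N$ with transitions $\mu$ if $j\ge k_0$ and $\mu'_j$ if $0\le j<k_0$. *)

theory Defs
  imports "HOL-Probability.Probability"
begin

type_synonym state = "int \<times> int"

definition shift :: "state \<Rightarrow> (int \<times> int) pmf \<Rightarrow> state pmf" where
  "shift x p = map_pmf (\<lambda>d. (fst x + fst d, snd x + snd d)) p"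

text \<open>Transition kernels (next-state laws). States are embedded in int x int;
  values of the kernels outside the respective state spaces are irrelevant.\<close>
definition stepZ0 :: "(int \<times> int) pmf \<Rightarrow> state \<Rightarrow> state pmf" where
  "stepZ0 \<mu> x = shift x \<mu>"

definition stepZ1 :: "nat \<Rightarrow> (int \<times> int) pmf \<Rightarrow> (nat \<Rightarrow> (int \<times> int) pmf) \<Rightarrow> state \<Rightarrow> state pmf" where
  "stepZ1 k0 \<mu> \<mu>'' x = shift x (if fst x \<ge> int k0 then \<mu> else \<mu>'' (nat (fst x)))"

definition stepZ2 :: "nat \<Rightarrow> (int \<times> int) pmf \<Rightarrow> (nat \<Rightarrow> (int \<times> int) pmf) \<Rightarrow> state \<Rightarrow> state pmf" where
  "stepZ2 k0 \<mu> \<mu>' x = shift x (if snd x \<ge> int k0 then \<mu> else \<mu>' (nat (snd x)))"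

definition lawZ :: "nat \<Rightarrow> (int \<times> int) pmf \<Rightarrow> (nat \<Rightarrow> (int \<times> int) pmf) \<Rightarrow> (nat \<Rightarrow> (int \<times> int) pmf)
    \<Rightarrow> (nat \<Rightarrow> nat \<Rightarrow> (int \<times> int) pmf) \<Rightarrow> state \<Rightarrow> (int \<times> int) pmf" where
  "lawZ k0 \<mu> \<mu>' \<mu>'' \<mu>2 x =
     (if fst x \<ge> int k0 \<and> snd x \<ge> int k0 then \<mu>
      else if fst x \<ge> int k0 then \<mu>' (nat (snd x))
      else if snd x \<ge> int k0 then \<mu>'' (nat (fst x))
      else \<mu>2 (nat (fst x)) (nat (snd x)))"

definition stepZ :: "nat \<Rightarrow> (int \<times> int) pmf \<Rightarrow> (nat \<Rightarrow> (int \<times> int) pmf) \<Rightarrow> (nat \<Rightarrow> (int \<times> int) pmf)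
    \<Rightarrow> (nat \<Rightarrow> nat \<Rightarrow> (int \<times> int) pmf) \<Rightarrow> state \<Rightarrow> state pmf" where
  "stepZ k0 \<mu> \<mu>' \<mu>'' \<mu>2 x = shift x (lawZ k0 \<mu> \<mu>' \<mu>'' \<mu>2 x)"

definition irreducible_on :: "'s set \<Rightarrow> ('s \<Rightarrow> 's pmf) \<Rightarrow> bool" where
  "irreducible_on S P \<longleftrightarrow>
     (\<forall>x\<in>S. \<forall>y\<in>S. (x, y) \<in> {(u, v). u \<in> S \<and> v \<in> S \<and> pmf (P u) v > 0}\<^sup>*)"

fun traj :: "('s \<Rightarrow> 's pmf) \<Rightarrow> nat \<Rightarrow> 's \<Rightarrow> 's list pmf" where
  "traj P 0 x = return_pmf [x]"
| "traj P (Suc n) x = bind_pmf (traj P n x) (\<lambda>p. map_pmf (\<lambda>y. p @ [y]) (P (last p)))"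

text \<open>P_x(T = n) for T = inf{n > 0. Z(n) \<in> A}, n \<ge> 1.\<close>
definition hit_prob :: "('s \<Rightarrow> 's pmf) \<Rightarrow> 's set \<Rightarrow> nat \<Rightarrow> 's \<Rightarrow> real" where
  "hit_prob P A n x = measure_pmf.prob (traj P n x)
      {p. p ! n \<in> A \<and> (\<forall>m\<in>{1..<n}. p ! m \<notin> A)}"

text \<open>P_x(T = \<infinity>) = lim_n P_x(T > n) (decreasing limit).\<close>
definition escape_prob :: "('s \<Rightarrow> 's pmf) \<Rightarrow> 's set \<Rightarrow> 's \<Rightarrow> real" where
  "escape_prob P A x = (INF n. measure_pmf.prob (traj P n x) {p. \<forall>m\<in>{1..n}. p ! m \<notin> A})"

text \<open>E_x(exp(\<delta> T)), with exp(\<delta> \<infinity>) = \<infinity>.\<close>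
definition exp_moment_hit :: "('s \<Rightarrow> 's pmf) \<Rightarrow> 's set \<Rightarrow> real \<Rightarrow> 's \<Rightarrow> ennreal" where
  "exp_moment_hit P A \<delta> x =
     (\<Sum>n. ennreal (exp (\<delta> * real (Suc n))) * ennreal (hit_prob P A (Suc n) x))
     + \<top> * ennreal (escape_prob P A x)"

end

theory Submission
  imports Defs
begin


lemma traj_set: "p \<in> set_pmf (traj P n x) \<Longrightarrow> length p = Suc n \<and> p ! 0 = x"
proof (induction n arbitrary: p)
  case 0 then show ?case by simp
next
  case (Suc n)
  then obtain q y where q: "q \<in> set_pmf (traj P n x)" and p: "p = q @ [y]" by auto
  from Suc.IH[OF q] show ?case using p by (simp add: nth_append)
qed

lemma traj_Suc': "traj P (Suc n) x = bind_pmf (P x) (\<lambda>y. map_pmf ((#) x) (traj P n y))"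
proof (induction n arbitrary: x)
  case 0
  show ?case by (simp add: bind_return_pmf map_pmf_def)
next
  case (Suc n)
  have "traj P (Suc (Suc n)) x = bind_pmf (traj P (Suc n) x) (\<lambda>p. map_pmf (\<lambda>y. p @ [y]) (P (last p)))"
    by simp
  also have "\<dots> = bind_pmf (P x) (\<lambda>y. bind_pmf (traj P n y) (\<lambda>q. map_pmf (\<lambda>z. (x # q) @ [z]) (P (last (x # q)))))"
    unfolding Suc.IH by (simp add: bind_assoc_pmf bind_map_pmf)
  also have "\<dots> = bind_pmf (P x) (\<lambda>y. map_pmf ((#) x) (traj P (Suc n) y))"
  proof (rule bind_pmf_cong[OF refl])
    fix y
    have "bind_pmf (traj P n y) (\<lambda>q. map_pmf (\<lambda>z. (x # q) @ [z]) (P (last (x # q))))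
        = bind_pmf (traj P n y) (\<lambda>q. map_pmf ((#) x) (map_pmf (\<lambda>z. q @ [z]) (P (last q))))"
    proof (rule bind_pmf_cong[OF refl])
      fix q assume "q \<in> set_pmf (traj P n y)"
      then have "q \<noteq> []" using traj_set[of q P n y] by auto
      then show "map_pmf (\<lambda>z. (x # q) @ [z]) (P (last (x # q))) = map_pmf ((#) x) (map_pmf (\<lambda>z. q @ [z]) (P (last q)))"
        by (simp add: pmf.map_comp o_def)
    qed
    also have "\<dots> = map_pmf ((#) x) (traj P (Suc n) y)"
      by (simp add: map_bind_pmf)
    finally show "bind_pmf (traj P n y) (\<lambda>q. map_pmf (\<lambda>z. (x # q) @ [z]) (P (last (x # q)))) = map_pmf ((#) x) (traj P (Suc n) y)" .
  qed
  finally show ?case .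
qed

lemma traj_emeasure_Suc:
  "emeasure (measure_pmf (traj P (Suc n) x)) S
     = (\<integral>\<^sup>+ y. emeasure (measure_pmf (traj P n y)) ((#) x -` S) \<partial>measure_pmf (P x))"
  by (subst traj_Suc') (simp del: traj.simps)

definition hs :: "'s set \<Rightarrow> nat \<Rightarrow> 's list set" where
  "hs A n = {q. q ! n \<in> A \<and> (\<forall>m<n. q ! m \<notin> A)}"
definition ss :: "'s set \<Rightarrow> nat \<Rightarrow> 's list set" where
  "ss A n = {q. \<forall>m\<le>n. q ! m \<notin> A}"

lemma h_0: "emeasure (measure_pmf (traj P 0 y)) (hs A 0) = indicator A y"
  by (simp add: hs_def indicator_def)

lemma sv_0: "emeasure (measure_pmf (traj P 0 y)) (ss A 0) = indicator (-A) y"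
  by (simp add: ss_def indicator_def)

lemma h_Suc: "emeasure (measure_pmf (traj P (Suc n) y)) (hs A (Suc n))
   = (if y \<in> A then 0 else \<integral>\<^sup>+ z. emeasure (measure_pmf (traj P n z)) (hs A n) \<partial>measure_pmf (P y))"
proof -
  have "(#) y -` hs A (Suc n) = (if y \<in> A then {} else hs A n)"
    by (auto simp: hs_def less_Suc_eq_0_disj)
  then show ?thesis by (simp add: traj_emeasure_Suc del: traj.simps)
qed

lemma sv_Suc: "emeasure (measure_pmf (traj P (Suc n) y)) (ss A (Suc n))
   = (if y \<in> A then 0 else \<integral>\<^sup>+ z. emeasure (measure_pmf (traj P n z)) (ss A n) \<partial>measure_pmf (P y))"
proof -
  have "(#) y -` ss A (Suc n) = (if y \<in> A then {} else ss A n)"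
  proof -
    have "(\<forall>m\<le>Suc n. (y#q) ! m \<notin> A) \<longleftrightarrow> y \<notin> A \<and> (\<forall>m\<le>n. q ! m \<notin> A)" for q
    proof
      assume H: "\<forall>m\<le>Suc n. (y#q) ! m \<notin> A"
      have "y \<notin> A" using H[rule_format, of 0] by simp
      moreover have "\<forall>m\<le>n. q ! m \<notin> A"
      proof (intro allI impI)
        fix m assume "m \<le> n" then have "Suc m \<le> Suc n" by simp
        with H show "q ! m \<notin> A" by fastforce
      qed
      ultimately show "y \<notin> A \<and> (\<forall>m\<le>n. q ! m \<notin> A)" by blast
    next
      assume H: "y \<notin> A \<and> (\<forall>m\<le>n. q ! m \<notin> A)"
      show "\<forall>m\<le>Suc n. (y#q) ! m \<notin> A"
      proof (intro allI impI)
        fix m assume "m \<le> Suc n" then show "(y#q) ! m \<notin> A" using H by (cases m) auto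
      qed
    qed
    then show ?thesis by (auto simp: ss_def)
  qed
  then show ?thesis by (simp add: traj_emeasure_Suc del: traj.simps)
qed

lemma hit_eq: "ennreal (hit_prob P A (Suc n) x) = (\<integral>\<^sup>+ y. emeasure (measure_pmf (traj P n y)) (hs A n) \<partial>measure_pmf (P x))"
proof -
  have "(#) x -` {p. p ! Suc n \<in> A \<and> (\<forall>m\<in>{1..<Suc n}. p ! m \<notin> A)} = hs A n"
  proof -
    have "(\<forall>m\<in>{1..<Suc n}. (x#q) ! m \<notin> A) \<longleftrightarrow> (\<forall>m<n. q ! m \<notin> A)" for q
    proof
      assume H: "\<forall>m\<in>{1..<Suc n}. (x#q) ! m \<notin> A"
      show "\<forall>m<n. q ! m \<notin> A"
      proof (intro allI impI)
        fix m assume "m < n" then have "Suc m \<in> {1..<Suc n}" by simp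
        with H show "q ! m \<notin> A" by fastforce
      qed
    next
      assume H: "\<forall>m<n. q ! m \<notin> A"
      show "\<forall>m\<in>{1..<Suc n}. (x#q) ! m \<notin> A"
      proof
        fix m assume "m \<in> {1..<Suc n}" then obtain m' where "m = Suc m'" "m' < n"
          by (cases m) auto
        with H show "(x#q) ! m \<notin> A" by simp
      qed
    qed
    then show ?thesis by (auto simp: hs_def)
  qed
  then show ?thesis unfolding hit_prob_def
    by (simp add: measure_pmf.emeasure_eq_measure[symmetric] traj_emeasure_Suc del: traj.simps)
qed

lemma esc_eq: "ennreal (measure_pmf.prob (traj P (Suc n) x) {p. \<forall>m\<in>{1..Suc n}. p ! m \<notin> A})
   = (\<integral>\<^sup>+ y. emeasure (measure_pmf (traj P n y)) (ss A n) \<partial>measure_pmf (P x))"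
proof -
  have "(#) x -` {p. \<forall>m\<in>{1..Suc n}. p ! m \<notin> A} = ss A n"
  proof -
    have "(\<forall>m\<in>{1..Suc n}. (x#q) ! m \<notin> A) \<longleftrightarrow> (\<forall>m\<le>n. q ! m \<notin> A)" for q
    proof
      assume H: "\<forall>m\<in>{1..Suc n}. (x#q) ! m \<notin> A"
      show "\<forall>m\<le>n. q ! m \<notin> A"
      proof (intro allI impI)
        fix m assume "m \<le> n" then have "Suc m \<in> {1..Suc n}" by simp
        with H show "q ! m \<notin> A" by fastforce
      qed
    next
      assume H: "\<forall>m\<le>n. q ! m \<notin> A"
      show "\<forall>m\<in>{1..Suc n}. (x#q) ! m \<notin> A"
      proof
        fix m assume "m \<in> {1..Suc n}" then obtain m' where "m = Suc m'" "m' \<le> n"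
          by (cases m) auto
        with H show "(x#q) ! m \<notin> A" by simp
      qed
    qed
    then show ?thesis by (auto simp: ss_def)
  qed
  then show ?thesis
    by (simp add: measure_pmf.emeasure_eq_measure[symmetric] traj_emeasure_Suc del: traj.simps)
qed



lemma exp_quad_pos: assumes "(0::real) \<le> t" shows "exp t \<le> 1 + t + t^2 * exp t"
proof (cases "t < 1")
  case True
  have "1 - t \<le> exp (-t)" using exp_ge_add_one_self[of "-t"] by simp
  then have "exp t * (1 - t) \<le> exp t * exp (-t)" by (simp add: mult_left_mono)
  then have "exp t * (1 - t) \<le> 1" by (simp add: exp_minus field_simps)
  then have "exp t * (1 - t) * (1 + t) \<le> 1 + t" using assms by (simp add: mult_right_mono)
  then show ?thesis by (simp add: algebra_simps power2_eq_square)
next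
  case False
  then have "1 \<le> t^2" by (simp add: one_le_power)
  then have "1 * exp t \<le> t^2 * exp t" by (intro mult_right_mono) auto
  then show ?thesis using assms by linarith
qed

lemma exp_quad_neg: assumes "(t::real) \<le> 0" shows "exp t \<le> 1 + t + t^2"
proof (cases "-1 < t")
  case True
  define u where "u = -t"
  have u: "0 \<le> u" "u < 1" using assms True by (auto simp: u_def)
  have "1 + u \<le> exp u" by simp
  then have "exp t \<le> 1 / (1 + u)" using u by (simp add: u_def exp_minus field_simps)
  also have "\<dots> \<le> 1 - u + u^2"
  proof -
    have "1 \<le> (1 - u + u^2) * (1 + u)" using u by (simp add: algebra_simps power2_eq_square power3_eq_cube)
    then show ?thesis using u by (simp add: field_simps)
  qed
  finally show ?thesis by (simp add: u_def)
next
  case False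
  then have "0 \<le> t * (t + 1)" using assms by (intro mult_nonpos_nonpos) auto
  then have "0 \<le> t * t + t" by (simp add: algebra_simps)
  moreover have "exp t \<le> 1" using assms by simp
  ultimately show ?thesis unfolding power2_eq_square by linarith
qed

lemma exp_quad: "exp (t::real) \<le> 1 + t + t^2 * (1 + exp t)"
proof (cases "0 \<le> t")
  case True
  have "0 \<le> t^2" by simp
  moreover have "t^2*(1+exp t) = t^2 + t^2*exp t" by (simp add: algebra_simps)
  ultimately show ?thesis using exp_quad_pos[of t] True by linarith
next
  case False
  have "0 \<le> t^2 * exp t" by simp
  moreover have "t^2*(1+exp t) = t^2 + t^2*exp t" by (simp add: algebra_simps)
  ultimately show ?thesis using exp_quad_neg[of t] False by linarith
qed

lemma sq_le_exp: assumes "(0::real) \<le> x" shows "x^2 \<le> 2 * exp x"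
  using exp_lower_Taylor_quadratic[OF assms] assms by simp

lemma pointwise_bound:
  fixes a s d0 K :: real
  assumes "0 < s" "s \<le> d0 / 2" "0 < d0" "-K \<le> a" "0 \<le> K"
  shows "exp (s * a) \<le> 1 + s * a + s^2 * (2 * K^2 + 16 / d0^2 * exp (d0 * a))"
proof -
  have key: "a^2 * (1 + exp (s * a)) \<le> 2 * K^2 + 16 / d0^2 * exp (d0 * a)"
  proof (cases "a \<le> 0")
    case True
    have "a^2 \<le> K^2" using assms True by (simp add: abs_le_square_iff[symmetric] abs_if)
    moreover have "exp (s * a) \<le> 1" using True assms by (simp add: mult_nonneg_nonpos)
    ultimately have "a^2 * (1 + exp (s * a)) \<le> K^2 * 2"
      by (intro mult_mono) auto
    moreover have "0 \<le> 16 / d0^2 * exp (d0 * a)" by simp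
    ultimately show ?thesis by linarith
  next
    case False
    have "(d0 * a / 2)^2 \<le> 2 * exp (d0 * a / 2)" using False assms by (intro sq_le_exp) simp
    then have a2: "a^2 \<le> 8 / d0^2 * exp (d0 * a / 2)" using assms
      by (simp add: field_simps power2_eq_square)
    have "exp (s * a) \<le> exp (d0 * a / 2)" using False assms by (simp add: mult_right_mono)
    moreover have "1 \<le> exp (s * a)" using False assms by simp
    ultimately have e: "1 + exp (s * a) \<le> 2 * exp (d0 * a / 2)" by linarith
    have "a^2 * (1 + exp (s * a)) \<le> (8 / d0^2 * exp (d0 * a / 2)) * (2 * exp (d0 * a / 2))"
      by (intro mult_mono a2 e) auto
    also have "\<dots> = 16 / d0^2 * (exp (d0 * a / 2) * exp (d0 * a / 2))" by simp
    also have "exp (d0 * a / 2) * exp (d0 * a / 2) = exp (d0 * a)" by (simp flip: exp_add)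
    finally show ?thesis by (simp add: add_increasing)
  qed
  have "exp (s * a) \<le> 1 + s * a + (s * a)^2 * (1 + exp (s * a))" by (rule exp_quad)
  also have "(s * a)^2 * (1 + exp (s * a)) = s^2 * (a^2 * (1 + exp (s * a)))" by (simp add: power_mult_distrib)
  also have "\<dots> \<le> s^2 * (2 * K^2 + 16 / d0^2 * exp (d0 * a))" by (intro mult_left_mono key) auto
  finally show ?thesis by simp
qed



lemma mgf_small:
  fixes \<mu> :: "(int \<times> int) pmf" and K d0 :: real
  assumes supp: "\<forall>d\<in>set_pmf \<mu>. -K \<le> real_of_int (fst d)" and K: "0 \<le> K" and d0: "0 < d0"
    and E: "(\<integral>\<^sup>+ d. ennreal (exp (d0 * real_of_int (fst d))) \<partial>measure_pmf \<mu>) < \<top>"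
    and m: "measure_pmf.expectation \<mu> (\<lambda>d. real_of_int (fst d)) < 0"
  shows "\<exists>s0>0. s0 \<le> d0 / 2 \<and> (\<forall>s. 0 < s \<and> s \<le> s0 \<longrightarrow>
     (\<integral>\<^sup>+ d. ennreal (exp (s * real_of_int (fst d))) \<partial>measure_pmf \<mu>)
        \<le> ennreal (1 + s * measure_pmf.expectation \<mu> (\<lambda>d. real_of_int (fst d)) / 2)
     \<and> 0 < 1 + s * measure_pmf.expectation \<mu> (\<lambda>d. real_of_int (fst d)) / 2
     \<and> 1 + s * measure_pmf.expectation \<mu> (\<lambda>d. real_of_int (fst d)) / 2 < 1)"
proof -
  define m1 where "m1 = measure_pmf.expectation \<mu> (\<lambda>d. real_of_int (fst d))"
  define g where "g = (\<lambda>d::int\<times>int. exp (d0 * real_of_int (fst d)))"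
  have m1: "m1 < 0" using m by (simp add: m1_def)
  have intg: "integrable (measure_pmf \<mu>) g"
    using E by (intro integrableI_nonneg) (auto simp: g_def)
  have intf: "integrable (measure_pmf \<mu>) (\<lambda>d. real_of_int (fst d))"
    using m not_integrable_integral_eq by fastforce
  define IG where "IG = measure_pmf.expectation \<mu> g"
  have IG0: "0 \<le> IG" unfolding IG_def g_def by (intro integral_nonneg_AE) auto
  define M where "M = 2 * K^2 + 16 / d0^2 * IG + 1"
  have M: "0 < M" using IG0 K d0 by (simp add: M_def add_nonneg_pos)
  define s0 where "s0 = min (d0/2) (min (-m1/(2*M)) (-1/m1))"
  have s0: "0 < s0" using d0 M m1 by (simp add: s0_def divide_neg_pos)
  have "\<forall>s. 0 < s \<and> s \<le> s0 \<longrightarrow>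
     (\<integral>\<^sup>+ d. ennreal (exp (s * real_of_int (fst d))) \<partial>measure_pmf \<mu>) \<le> ennreal (1 + s * m1 / 2)
     \<and> 0 < 1 + s * m1 / 2 \<and> 1 + s * m1 / 2 < 1"
  proof (intro allI impI)
    fix s assume s: "0 < s \<and> s \<le> s0"
    have s1: "s \<le> d0/2" "s \<le> -m1/(2*M)" "s \<le> -1/m1" using s by (auto simp: s0_def)
    have ints: "integrable (measure_pmf \<mu>) (\<lambda>d. exp (s * real_of_int (fst d)))"
    proof (rule Bochner_Integration.integrable_bound[where f="\<lambda>d. 1 + g d"])
      show "integrable (measure_pmf \<mu>) (\<lambda>d. 1 + g d)" using intg by simp
      show "(\<lambda>d. exp (s * real_of_int (fst d))) \<in> borel_measurable (measure_pmf \<mu>)" by simp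
      show "AE d in measure_pmf \<mu>. norm (exp (s * real_of_int (fst d))) \<le> norm (1 + g d)"
      proof (rule AE_I2)
        fix d :: "int \<times> int"
        have "exp (s * real_of_int (fst d)) \<le> 1 + g d"
        proof (cases "0 \<le> fst d")
          case True
          then have "s * real_of_int (fst d) \<le> d0 * real_of_int (fst d)"
            using s1 s d0 by (intro mult_right_mono) auto
          then have "exp (s * real_of_int (fst d)) \<le> g d" by (simp add: g_def)
          then show ?thesis by (simp add: g_def add_increasing)
        next
          case False
          then have "exp (s * real_of_int (fst d)) \<le> 1" using s by (simp add: mult_pos_neg mult_nonneg_nonpos)
          then show ?thesis by (simp add: g_def add_increasing2)
        qed
        then show "norm (exp (s * real_of_int (fst d))) \<le> norm (1 + g d)" by (simp add: g_def)
      qed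
    qed
    define R where "R = (\<lambda>d::int\<times>int. 1 + s * real_of_int (fst d) + s^2 * (2 * K^2 + 16 / d0^2 * g d))"
    have intR: "integrable (measure_pmf \<mu>) R" unfolding R_def using intg intf by simp
    have "measure_pmf.expectation \<mu> (\<lambda>d. exp (s * real_of_int (fst d))) \<le> measure_pmf.expectation \<mu> R"
    proof (rule integral_mono_AE[OF ints intR])
      show "AE d in measure_pmf \<mu>. exp (s * real_of_int (fst d)) \<le> R d"
        unfolding AE_measure_pmf_iff
      proof
        fix d assume "d \<in> set_pmf \<mu>"
        then have "-K \<le> real_of_int (fst d)" using supp by blast
        then show "exp (s * real_of_int (fst d)) \<le> R d" unfolding R_def g_def
          using pointwise_bound[of s d0 K "real_of_int (fst d)"] s s1 d0 K by simp
      qed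
    qed
    also have "measure_pmf.expectation \<mu> R = 1 + s * m1 + s^2 * (2 * K^2 + 16 / d0^2 * IG)"
      unfolding R_def m1_def IG_def using intg intf by simp
    also have "\<dots> \<le> 1 + s * m1 + s^2 * M" unfolding M_def by (simp add: algebra_simps)
    also have "s^2 * M = s * (s * M)" by (simp add: power2_eq_square)
    also have "s * M \<le> - m1 / 2" using s1(2) M by (simp add: field_simps)
    then have "s * (s * M) \<le> s * (- m1 / 2)" using s by (intro mult_left_mono) auto
    then have "1 + s * m1 + s * (s * M) \<le> 1 + s * m1 / 2" by (simp add: algebra_simps)
    finally have I: "measure_pmf.expectation \<mu> (\<lambda>d. exp (s * real_of_int (fst d))) \<le> 1 + s * m1 / 2" .
    have "(\<integral>\<^sup>+ d. ennreal (exp (s * real_of_int (fst d))) \<partial>measure_pmf \<mu>)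
        = ennreal (measure_pmf.expectation \<mu> (\<lambda>d. exp (s * real_of_int (fst d))))"
      by (rule nn_integral_eq_integral[OF ints]) simp
    also have "\<dots> \<le> ennreal (1 + s * m1 / 2)" using I by (rule ennreal_leI)
    finally show "(\<integral>\<^sup>+ d. ennreal (exp (s * real_of_int (fst d))) \<partial>measure_pmf \<mu>) \<le> ennreal (1 + s * m1 / 2)
     \<and> 0 < 1 + s * m1 / 2 \<and> 1 + s * m1 / 2 < 1"
    proof (intro conjI)
      have "s * (-m1) \<le> 1" using s1(3) m1 by (simp add: field_simps)
      then show "0 < 1 + s * m1 / 2" by simp
      show "1 + s * m1 / 2 < 1" using s m1 by (simp add: mult_pos_neg)
    qed
  qed
  then show ?thesis using s0 by (auto simp: m1_def s0_def intro!: exI[of _ s0])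
qed



lemma rr_simp: assumes "r * \<rho> = (1::real)" "0 < r" "0 < \<rho>"
  shows "ennreal r * (ennreal e * ennreal \<rho>) = ennreal e"
proof (cases "0 \<le> e")
  case True
  have "ennreal r * (ennreal e * ennreal \<rho>) = ennreal (r * (e * \<rho>))"
    using assms True by (simp add: ennreal_mult)
  also have "r * (e * \<rho>) = e" using assms(1) by (simp add: algebra_simps)
  finally show ?thesis .
next
  case False then show ?thesis by (simp add: ennreal_neg)
qed

lemma claim1:
  fixes P :: "int \<times> int \<Rightarrow> (int \<times> int) pmf" and A :: "(int \<times> int) set" and s r \<rho> :: real
  assumes supp: "\<And>y. y \<notin> A \<Longrightarrow> \<forall>z\<in>set_pmf (P y). 0 \<le> fst z"
    and drift: "\<And>y. y \<notin> A \<Longrightarrow> (\<integral>\<^sup>+ z. ennreal (exp (s * real_of_int (fst z))) \<partial>measure_pmf (P y))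
          \<le> ennreal (exp (s * real_of_int (fst y))) * ennreal \<rho>"
    and r: "r * \<rho> = 1" "0 < r" "0 < \<rho>" "0 \<le> s"
  shows "0 \<le> fst y \<Longrightarrow> (\<Sum>m<N. ennreal (r^m) * emeasure (measure_pmf (traj P m y)) (hs A m))
            \<le> ennreal (exp (s * real_of_int (fst y)))"
proof (induction N arbitrary: y)
  case 0 show ?case by simp
next
  case (Suc N)
  let ?h = "\<lambda>m z. emeasure (measure_pmf (traj P m z)) (hs A m)"
  have e1: "1 \<le> exp (s * real_of_int (fst y))" using Suc.prems r by simp
  show ?case
  proof (cases "y \<in> A")
    case True
    have "(\<Sum>m<Suc N. ennreal (r^m) * ?h m y) = ennreal (r^0) * ?h 0 y + (\<Sum>m<N. ennreal (r^Suc m) * ?h (Suc m) y)"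
      by (rule sum.lessThan_Suc_shift)
    also have "\<dots> = 1" using True by (simp add: h_Suc del: traj.simps) (simp add: hs_def)
    also have "\<dots> \<le> ennreal (exp (s * real_of_int (fst y)))" using e1 by simp
    finally show ?thesis .
  next
    case False
    have "(\<Sum>m<Suc N. ennreal (r^m) * ?h m y) = ennreal (r^0) * ?h 0 y + (\<Sum>m<N. ennreal (r^Suc m) * ?h (Suc m) y)"
      by (rule sum.lessThan_Suc_shift)
    also have "\<dots> = (\<Sum>m<N. ennreal (r^Suc m) * ?h (Suc m) y)"
      using False by (simp add: hs_def)
    also have "\<dots> = (\<Sum>m<N. \<integral>\<^sup>+ z. ennreal r * (ennreal (r^m) * ?h m z) \<partial>measure_pmf (P y))"
    proof (rule sum.cong[OF refl])
      fix m
      have "ennreal (r^Suc m) * ?h (Suc m) y = ennreal r * ennreal (r^m) * (\<integral>\<^sup>+ z. ?h m z \<partial>measure_pmf (P y))"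
        using False r by (simp add: h_Suc ennreal_mult del: traj.simps)
      also have "\<dots> = (\<integral>\<^sup>+ z. ennreal r * (ennreal (r^m) * ?h m z) \<partial>measure_pmf (P y))"
        by (simp add: nn_integral_cmult mult.assoc)
      finally show "ennreal (r^Suc m) * ?h (Suc m) y = (\<integral>\<^sup>+ z. ennreal r * (ennreal (r^m) * ?h m z) \<partial>measure_pmf (P y))" .
    qed
    also have "\<dots> = (\<integral>\<^sup>+ z. ennreal r * (\<Sum>m<N. ennreal (r^m) * ?h m z) \<partial>measure_pmf (P y))"
      by (simp add: nn_integral_sum sum_distrib_left)
    also have "\<dots> \<le> (\<integral>\<^sup>+ z. ennreal r * ennreal (exp (s * real_of_int (fst z))) \<partial>measure_pmf (P y))"
    proof (rule nn_integral_mono_AE)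
      show "AE z in measure_pmf (P y). ennreal r * (\<Sum>m<N. ennreal (r^m) * ?h m z) \<le> ennreal r * ennreal (exp (s * real_of_int (fst z)))"
        unfolding AE_measure_pmf_iff
      proof
        fix z assume "z \<in> set_pmf (P y)"
        then have "0 \<le> fst z" using supp[OF False] by blast
        from Suc.IH[OF this] show "ennreal r * (\<Sum>m<N. ennreal (r^m) * ?h m z) \<le> ennreal r * ennreal (exp (s * real_of_int (fst z)))"
          by (rule mult_left_mono) simp
      qed
    qed
    also have "\<dots> = ennreal r * (\<integral>\<^sup>+ z. ennreal (exp (s * real_of_int (fst z))) \<partial>measure_pmf (P y))"
      by (simp add: nn_integral_cmult)
    also have "\<dots> \<le> ennreal r * (ennreal (exp (s * real_of_int (fst y))) * ennreal \<rho>)"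
      by (intro mult_left_mono drift False) simp
    also have "\<dots> = ennreal (exp (s * real_of_int (fst y)))" by (rule rr_simp[OF r(1-3)])
    finally show ?thesis .
  qed
qed

lemma claim2:
  fixes P :: "int \<times> int \<Rightarrow> (int \<times> int) pmf" and A :: "(int \<times> int) set" and s r \<rho> :: real
  assumes supp: "\<And>y. y \<notin> A \<Longrightarrow> \<forall>z\<in>set_pmf (P y). 0 \<le> fst z"
    and drift: "\<And>y. y \<notin> A \<Longrightarrow> (\<integral>\<^sup>+ z. ennreal (exp (s * real_of_int (fst z))) \<partial>measure_pmf (P y))
          \<le> ennreal (exp (s * real_of_int (fst y))) * ennreal \<rho>"
    and r: "r * \<rho> = 1" "0 < r" "0 < \<rho>" "0 \<le> s"
  shows "0 \<le> fst y \<Longrightarrow> ennreal (r^N) * emeasure (measure_pmf (traj P N y)) (ss A N)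
            \<le> ennreal (exp (s * real_of_int (fst y)))"
proof (induction N arbitrary: y)
  case 0
  have e1: "1 \<le> exp (s * real_of_int (fst y))" using 0 r by simp
  have "emeasure (measure_pmf (traj P 0 y)) (ss A 0) \<le> 1" by (simp add: indicator_def)
  also have "(1::ennreal) = ennreal 1" by simp
  also have "\<dots> \<le> ennreal (exp (s * real_of_int (fst y)))" using e1 by (rule ennreal_leI)
  finally show ?case by simp
next
  case (Suc N)
  let ?h = "\<lambda>m z. emeasure (measure_pmf (traj P m z)) (ss A m)"
  show ?case
  proof (cases "y \<in> A")
    case True
    then show ?thesis by (simp add: sv_Suc del: traj.simps)
  next
    case False
    have "ennreal (r^Suc N) * ?h (Suc N) y = ennreal r * ennreal (r^N) * (\<integral>\<^sup>+ z. ?h N z \<partial>measure_pmf (P y))"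
      using False r by (simp add: sv_Suc ennreal_mult del: traj.simps)
    also have "\<dots> = (\<integral>\<^sup>+ z. ennreal r * (ennreal (r^N) * ?h N z) \<partial>measure_pmf (P y))"
      by (simp add: nn_integral_cmult mult.assoc)
    also have "\<dots> \<le> (\<integral>\<^sup>+ z. ennreal r * ennreal (exp (s * real_of_int (fst z))) \<partial>measure_pmf (P y))"
    proof (rule nn_integral_mono_AE)
      show "AE z in measure_pmf (P y). ennreal r * (ennreal (r^N) * ?h N z) \<le> ennreal r * ennreal (exp (s * real_of_int (fst z)))"
        unfolding AE_measure_pmf_iff
      proof
        fix z assume "z \<in> set_pmf (P y)"
        then have "0 \<le> fst z" using supp[OF False] by blast
        from Suc.IH[OF this] show "ennreal r * (ennreal (r^N) * ?h N z) \<le> ennreal r * ennreal (exp (s * real_of_int (fst z)))"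
          by (rule mult_left_mono) simp
      qed
    qed
    also have "\<dots> = ennreal r * (\<integral>\<^sup>+ z. ennreal (exp (s * real_of_int (fst z))) \<partial>measure_pmf (P y))"
      by (simp add: nn_integral_cmult)
    also have "\<dots> \<le> ennreal r * (ennreal (exp (s * real_of_int (fst y))) * ennreal \<rho>)"
      by (intro mult_left_mono drift False) simp
    also have "\<dots> = ennreal (exp (s * real_of_int (fst y)))" by (rule rr_simp[OF r(1-3)])
    finally show ?thesis .
  qed
qed



lemma drop_snd:
  fixes \<nu> :: "(int \<times> int) pmf" and d0 \<gamma> K C0 :: real
  assumes supp: "\<forall>d\<in>set_pmf \<nu>. -K \<le> real_of_int (snd d)" and g: "0 < \<gamma>" and C0: "0 \<le> C0"
    and I: "(\<integral>\<^sup>+ d. ennreal (exp (d0 * real_of_int (fst d) + \<gamma> * real_of_int (snd d))) \<partial>measure_pmf \<nu>) \<le> ennreal C0"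
  shows "(\<integral>\<^sup>+ d. ennreal (exp (d0 * real_of_int (fst d))) \<partial>measure_pmf \<nu>) \<le> ennreal (C0 * exp (\<gamma> * K))"
proof -
  have "(\<integral>\<^sup>+ d. ennreal (exp (d0 * real_of_int (fst d))) \<partial>measure_pmf \<nu>)
     \<le> (\<integral>\<^sup>+ d. ennreal (exp (d0 * real_of_int (fst d) + \<gamma> * real_of_int (snd d))) * ennreal (exp (\<gamma> * K)) \<partial>measure_pmf \<nu>)"
  proof (rule nn_integral_mono_AE)
    show "AE d in measure_pmf \<nu>. ennreal (exp (d0 * real_of_int (fst d))) \<le> ennreal (exp (d0 * real_of_int (fst d) + \<gamma> * real_of_int (snd d))) * ennreal (exp (\<gamma> * K))"
      unfolding AE_measure_pmf_iff
    proof
      fix d assume "d \<in> set_pmf \<nu>"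
      then have "-K \<le> real_of_int (snd d)" using supp by blast
      then have "0 \<le> \<gamma> * (real_of_int (snd d) + K)" using g by (intro mult_nonneg_nonneg) auto
      moreover have "\<gamma> * (real_of_int (snd d) + K) = \<gamma> * real_of_int (snd d) + \<gamma> * K" by (rule distrib_left)
      ultimately have "d0 * real_of_int (fst d) \<le> d0 * real_of_int (fst d) + \<gamma> * real_of_int (snd d) + \<gamma> * K"
        by linarith
      then have "exp (d0 * real_of_int (fst d)) \<le> exp (d0 * real_of_int (fst d) + \<gamma> * real_of_int (snd d)) * exp (\<gamma> * K)"
        by (simp flip: exp_add)
      then show "ennreal (exp (d0 * real_of_int (fst d))) \<le> ennreal (exp (d0 * real_of_int (fst d) + \<gamma> * real_of_int (snd d))) * ennreal (exp (\<gamma> * K))"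
        by (simp flip: ennreal_mult)
    qed
  qed
  also have "\<dots> = (\<integral>\<^sup>+ d. ennreal (exp (d0 * real_of_int (fst d) + \<gamma> * real_of_int (snd d))) \<partial>measure_pmf \<nu>) * ennreal (exp (\<gamma> * K))"
    by (simp add: nn_integral_multc)
  also have "\<dots> \<le> ennreal C0 * ennreal (exp (\<gamma> * K))" by (intro mult_right_mono I) simp
  also have "\<dots> = ennreal (C0 * exp (\<gamma> * K))"
    using C0 by (simp add: ennreal_mult)
  finally show ?thesis .
qed

lemma mgf_crude:
  fixes \<nu> :: "(int \<times> int) pmf" and s d0 E0 :: real
  assumes s: "0 < s" "s \<le> d0" and E0: "0 \<le> E0"
    and I: "(\<integral>\<^sup>+ d. ennreal (exp (d0 * real_of_int (fst d))) \<partial>measure_pmf \<nu>) \<le> ennreal E0"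
  shows "(\<integral>\<^sup>+ d. ennreal (exp (s * real_of_int (fst d))) \<partial>measure_pmf \<nu>) \<le> ennreal (1 + E0)"
proof -
  have "(\<integral>\<^sup>+ d. ennreal (exp (s * real_of_int (fst d))) \<partial>measure_pmf \<nu>)
      \<le> (\<integral>\<^sup>+ d. 1 + ennreal (exp (d0 * real_of_int (fst d))) \<partial>measure_pmf \<nu>)"
  proof (rule nn_integral_mono)
    fix d :: "int \<times> int"
    have "exp (s * real_of_int (fst d)) \<le> 1 + exp (d0 * real_of_int (fst d))"
    proof (cases "0 \<le> fst d")
      case True
      then have "s * real_of_int (fst d) \<le> d0 * real_of_int (fst d)"
        using s by (intro mult_right_mono) auto
      then have "exp (s * real_of_int (fst d)) \<le> exp (d0 * real_of_int (fst d))" by simp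
      then show ?thesis by (simp add: add_increasing)
    next
      case False
      then have "exp (s * real_of_int (fst d)) \<le> 1" using s by (simp add: mult_nonneg_nonpos)
      then show ?thesis by (simp add: add_increasing2)
    qed
    then have "ennreal (exp (s * real_of_int (fst d))) \<le> ennreal (1 + exp (d0 * real_of_int (fst d)))"
      by (rule ennreal_leI)
    then show "ennreal (exp (s * real_of_int (fst d))) \<le> 1 + ennreal (exp (d0 * real_of_int (fst d)))"
      by (simp add: ennreal_plus)
  qed
  also have "\<dots> = 1 + (\<integral>\<^sup>+ d. ennreal (exp (d0 * real_of_int (fst d))) \<partial>measure_pmf \<nu>)"
    by (simp add: nn_integral_add measure_pmf.emeasure_space_1)
  also have "\<dots> \<le> 1 + ennreal E0" using I by (rule add_left_mono)
  also have "\<dots> = ennreal (1 + E0)" using E0 by (simp add: ennreal_plus)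
  finally show ?thesis .
qed

lemma shift_int:
  "(\<integral>\<^sup>+ z. ennreal (exp (s * real_of_int (fst z))) \<partial>measure_pmf (shift y \<nu>))
    = ennreal (exp (s * real_of_int (fst y))) * (\<integral>\<^sup>+ d. ennreal (exp (s * real_of_int (fst d))) \<partial>measure_pmf \<nu>)"
  by (simp add: shift_def distrib_left exp_add ennreal_mult nn_integral_cmult)



theorem corollary5p3:
  fixes k0 :: nat
    and \<mu> :: "(int \<times> int) pmf"
    and \<mu>' \<mu>'' :: "nat \<Rightarrow> (int \<times> int) pmf"
    and \<mu>2 :: "nat \<Rightarrow> nat \<Rightarrow> (int \<times> int) pmf"
  assumes k0: "k0 \<ge> 1"
    and A1_mu: "\<forall>(a, b)\<in>set_pmf \<mu>. a \<ge> - int k0 \<and> b \<ge> - int k0"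
    and A1_mu': "\<forall>j<k0. \<forall>(a, b)\<in>set_pmf (\<mu>' j). a \<ge> - int k0 \<and> b \<ge> - int j"
    and A1_mu'': "\<forall>i<k0. \<forall>(a, b)\<in>set_pmf (\<mu>'' i). b \<ge> - int k0 \<and> a \<ge> - int i"
    and A1_mu2: "\<forall>i<k0. \<forall>j<k0. \<forall>(a, b)\<in>set_pmf (\<mu>2 i j). a \<ge> - int i \<and> b \<ge> - int j"
    and A2: "\<exists>\<delta>0 \<gamma> C0. \<delta>0 > 0 \<and> \<gamma> > 0 \<and> C0 > 0 \<and>
              (\<forall>i j :: nat. (\<integral>\<^sup>+ d. ennreal (exp (\<delta>0 * real_of_int (fst d) + \<gamma> * real_of_int (snd d)))
                   \<partial>measure_pmf (lawZ k0 \<mu> \<mu>' \<mu>'' \<mu>2 (int i, int j))) \<le> ennreal C0)"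
    and A3_Z0: "irreducible_on UNIV (stepZ0 \<mu>)"
    and A3_Z1: "irreducible_on {x. fst x \<ge> 0} (stepZ1 k0 \<mu> \<mu>'')"
    and A3_Z2: "irreducible_on {x. snd x \<ge> 0} (stepZ2 k0 \<mu> \<mu>')"
    and A3_Z: "irreducible_on {x. fst x \<ge> 0 \<and> snd x \<ge> 0} (stepZ k0 \<mu> \<mu>' \<mu>'' \<mu>2)"
    and m1: "measure_pmf.expectation \<mu> (\<lambda>d. real_of_int (fst d)) < 0"
  shows "\<forall>\<theta>>0. \<exists>C>0. \<exists>\<delta>>0. \<forall>(i::nat) (j::int) (k::nat).
           exp_moment_hit (stepZ1 k0 \<mu> \<mu>'') {x. fst x \<le> max (int k0 - 1) (int k)} \<delta> (int i, j)
             \<le> ennreal (C * exp (\<theta> * real i))"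
proof (intro allI impI)
  fix \<theta> :: real assume \<theta>: "0 < \<theta>"
  obtain \<delta>0 \<gamma> C0 where h: "\<delta>0 > 0" "\<gamma> > 0" "C0 > 0" and A2': "\<And>i j :: nat. (\<integral>\<^sup>+ d. ennreal (exp (\<delta>0 * real_of_int (fst d) + \<gamma> * real_of_int (snd d)))
                   \<partial>measure_pmf (lawZ k0 \<mu> \<mu>' \<mu>'' \<mu>2 (int i, int j))) \<le> ennreal C0"
    using A2 by blast
  define E0 where "E0 = C0 * exp (\<gamma> * real k0)"
  have E0: "0 < E0" using h by (simp add: E0_def)
  have s_mu: "\<forall>d\<in>set_pmf \<mu>. - int k0 \<le> fst d \<and> - int k0 \<le> snd d" using A1_mu by auto
  have s_mu'': "\<forall>d\<in>set_pmf (\<mu>'' i). - int i \<le> fst d \<and> - int k0 \<le> snd d" if "i < k0" for i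
  proof -
    have "\<forall>(a, b)\<in>set_pmf (\<mu>'' i). b \<ge> - int k0 \<and> a \<ge> - int i" using A1_mu'' that by blast
    then show ?thesis by auto
  qed
  have Emu: "(\<integral>\<^sup>+ d. ennreal (exp (\<delta>0 * real_of_int (fst d))) \<partial>measure_pmf \<mu>) \<le> ennreal E0"
  proof -
    have "lawZ k0 \<mu> \<mu>' \<mu>'' \<mu>2 (int k0, int k0) = \<mu>" by (simp add: lawZ_def)
    then have I: "(\<integral>\<^sup>+ d. ennreal (exp (\<delta>0 * real_of_int (fst d) + \<gamma> * real_of_int (snd d))) \<partial>measure_pmf \<mu>) \<le> ennreal C0"
      using A2'[of k0 k0] by simp
    have "\<forall>d\<in>set_pmf \<mu>. - real k0 \<le> real_of_int (snd d)"
    proof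
      fix d assume "d \<in> set_pmf \<mu>" then have "- int k0 \<le> snd d" using s_mu by blast
      then show "- real k0 \<le> real_of_int (snd d)" by linarith
    qed
    from drop_snd[OF this h(2) _ I] h show ?thesis by (simp add: E0_def)
  qed
  have Emu'': "(\<integral>\<^sup>+ d. ennreal (exp (\<delta>0 * real_of_int (fst d))) \<partial>measure_pmf (\<mu>'' i)) \<le> ennreal E0" if i: "i < k0" for i
  proof -
    have "lawZ k0 \<mu> \<mu>' \<mu>'' \<mu>2 (int i, int k0) = \<mu>'' i" using i by (simp add: lawZ_def)
    then have I: "(\<integral>\<^sup>+ d. ennreal (exp (\<delta>0 * real_of_int (fst d) + \<gamma> * real_of_int (snd d))) \<partial>measure_pmf (\<mu>'' i)) \<le> ennreal C0"
      using A2'[of i k0] by simp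
    have "\<forall>d\<in>set_pmf (\<mu>'' i). - real k0 \<le> real_of_int (snd d)"
    proof
      fix d assume "d \<in> set_pmf (\<mu>'' i)" then have "- int k0 \<le> snd d" using s_mu''[OF i] by blast
      then show "- real k0 \<le> real_of_int (snd d)" by linarith
    qed
    from drop_snd[OF this h(2) _ I] h show ?thesis by (simp add: E0_def)
  qed
  have supp_fst: "\<forall>d\<in>set_pmf \<mu>. - real k0 \<le> real_of_int (fst d)"
  proof
    fix d assume "d \<in> set_pmf \<mu>" then have "- int k0 \<le> fst d" using s_mu by blast
    then show "- real k0 \<le> real_of_int (fst d)" by linarith
  qed
  have Efin: "(\<integral>\<^sup>+ d. ennreal (exp (\<delta>0 * real_of_int (fst d))) \<partial>measure_pmf \<mu>) < \<top>"
    using Emu by (rule order.strict_trans1) simp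
  obtain s0 where s0: "0 < s0" "s0 \<le> \<delta>0 / 2" and S: "\<forall>s. 0 < s \<and> s \<le> s0 \<longrightarrow>
     (\<integral>\<^sup>+ d. ennreal (exp (s * real_of_int (fst d))) \<partial>measure_pmf \<mu>)
        \<le> ennreal (1 + s * measure_pmf.expectation \<mu> (\<lambda>d. real_of_int (fst d)) / 2)
     \<and> 0 < 1 + s * measure_pmf.expectation \<mu> (\<lambda>d. real_of_int (fst d)) / 2
     \<and> 1 + s * measure_pmf.expectation \<mu> (\<lambda>d. real_of_int (fst d)) / 2 < 1"
    using mgf_small[OF supp_fst _ h(1) Efin m1] by auto
  define s where "s = min \<theta> s0"
  have s: "0 < s" "s \<le> s0" "s \<le> \<theta>" "s \<le> \<delta>0" using s0 \<theta> h by (auto simp: s_def)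
  define \<rho> where "\<rho> = 1 + s * measure_pmf.expectation \<mu> (\<lambda>d. real_of_int (fst d)) / 2"
  have \<Phi>: "(\<integral>\<^sup>+ d. ennreal (exp (s * real_of_int (fst d))) \<partial>measure_pmf \<mu>) \<le> ennreal \<rho>"
    and \<rho>: "0 < \<rho>" "\<rho> < 1" using S s unfolding \<rho>_def by auto
  define r where "r = 1 / \<rho>"
  have r: "r * \<rho> = 1" "0 < r" "1 < r" using \<rho> by (auto simp: r_def field_simps)
  define \<delta> where "\<delta> = ln r"
  have \<delta>: "0 < \<delta>" using r by (simp add: \<delta>_def)
  define C where "C = r * (1 + E0)"
  have C: "0 < C" using r E0 by (simp add: C_def)
  have main: "exp_moment_hit (stepZ1 k0 \<mu> \<mu>'') {x. fst x \<le> max (int k0 - 1) (int k)} \<delta> (int i, j)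
             \<le> ennreal (C * exp (\<theta> * real i))" for i :: nat and j :: int and k :: nat
  proof -
    define P where "P = stepZ1 k0 \<mu> \<mu>''"
    define A where "A = {x :: int \<times> int. fst x \<le> max (int k0 - 1) (int k)}"
    define X where "X = (int i, j)"
    have notA: "int k0 \<le> fst y" if "y \<notin> A" for y using that by (auto simp: A_def)
    have Py: "P y = shift y \<mu>" if "y \<notin> A" for y using notA[OF that] by (simp add: P_def stepZ1_def)
    have supp: "\<forall>z\<in>set_pmf (P y). 0 \<le> fst z" if yA: "y \<notin> A" for y
    proof
      fix z assume "z \<in> set_pmf (P y)"
      then obtain d where d: "d \<in> set_pmf \<mu>" and z: "fst z = fst y + fst d"
        unfolding Py[OF yA] by (auto simp: shift_def)
      show "0 \<le> fst z" using s_mu d z notA[OF yA] by force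
    qed
    have drift: "(\<integral>\<^sup>+ z. ennreal (exp (s * real_of_int (fst z))) \<partial>measure_pmf (P y))
          \<le> ennreal (exp (s * real_of_int (fst y))) * ennreal \<rho>" if "y \<notin> A" for y
      unfolding Py[OF that] shift_int by (intro mult_left_mono \<Phi>) simp
    have s0': "0 \<le> s" using s by simp
    have c1: "(\<Sum>m<N. ennreal (r^m) * emeasure (measure_pmf (traj P m y)) (hs A m))
            \<le> ennreal (exp (s * real_of_int (fst y)))" if "0 \<le> fst y" for y N
      by (rule claim1[where A=A and P=P and s=s and \<rho>=\<rho> and r=r]) (fact supp drift r(1,2) \<rho>(1) s0' that)+
    have c2: "ennreal (r^N) * emeasure (measure_pmf (traj P N y)) (ss A N)
            \<le> ennreal (exp (s * real_of_int (fst y)))" if "0 \<le> fst y" for y N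
      by (rule claim2[where A=A and P=P and s=s and \<rho>=\<rho> and r=r]) (fact supp drift r(1,2) \<rho>(1) s0' that)+
    have PX: "P X = shift X (if int k0 \<le> int i then \<mu> else \<mu>'' i)" by (simp add: P_def X_def stepZ1_def)
    have FX: "(\<integral>\<^sup>+ z. ennreal (exp (s * real_of_int (fst z))) \<partial>measure_pmf (P X))
          \<le> ennreal (exp (s * real i)) * ennreal (1 + E0)"
    proof -
      have "(\<integral>\<^sup>+ d. ennreal (exp (s * real_of_int (fst d))) \<partial>measure_pmf (if int k0 \<le> int i then \<mu> else \<mu>'' i)) \<le> ennreal (1 + E0)"
        using mgf_crude[OF s(1) s(4) _ Emu] mgf_crude[OF s(1) s(4) _ Emu''[of i]] E0 by auto
      then have "ennreal (exp (s * real i)) * (\<integral>\<^sup>+ d. ennreal (exp (s * real_of_int (fst d))) \<partial>measure_pmf (if int k0 \<le> int i then \<mu> else \<mu>'' i)) \<le> ennreal (exp (s * real i)) * ennreal (1 + E0)"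
        by (rule mult_left_mono) simp
      then show ?thesis unfolding PX shift_int by (simp add: X_def)
    qed
    have suppX: "\<forall>z\<in>set_pmf (P X). 0 \<le> fst z"
    proof
      fix z assume "z \<in> set_pmf (P X)"
      then obtain d where d: "d \<in> set_pmf (if int k0 \<le> int i then \<mu> else \<mu>'' i)" and z: "fst z = int i + fst d"
        unfolding PX by (auto simp: X_def shift_def)
      show "0 \<le> fst z"
      proof (cases "int k0 \<le> int i")
        case True then show ?thesis using s_mu d z by force
      next
        case False then show ?thesis using s_mu''[of i] d z by force
      qed
    qed
    have e_pos: "0 \<le> (1 + E0) * exp (s * real i)" using E0 by simp
    have sum: "(\<Sum>n. ennreal (exp (\<delta> * real (Suc n))) * ennreal (hit_prob P A (Suc n) X))
        \<le> ennreal (r * ((1 + E0) * exp (s * real i)))"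
    proof (rule suminf_le_const[OF summableI])
      fix N
      let ?h = "\<lambda>m z. emeasure (measure_pmf (traj P m z)) (hs A m)"
      have "(\<Sum>n<N. ennreal (exp (\<delta> * real (Suc n))) * ennreal (hit_prob P A (Suc n) X))
          = (\<Sum>n<N. \<integral>\<^sup>+ z. ennreal r * (ennreal (r^n) * ?h n z) \<partial>measure_pmf (P X))"
      proof (rule sum.cong[OF refl])
        fix n
        have "\<delta> * real (Suc n) = real (Suc n) * ln r" by (simp add: \<delta>_def)
        then have "exp (\<delta> * real (Suc n)) = exp (ln r) ^ Suc n" by (simp only: exp_of_nat_mult)
        then have "exp (\<delta> * real (Suc n)) = r ^ Suc n" using r by simp
        then have "ennreal (exp (\<delta> * real (Suc n))) = ennreal r * ennreal (r ^ n)"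
          using r by (simp add: ennreal_mult)
        then show "ennreal (exp (\<delta> * real (Suc n))) * ennreal (hit_prob P A (Suc n) X)
            = (\<integral>\<^sup>+ z. ennreal r * (ennreal (r^n) * ?h n z) \<partial>measure_pmf (P X))"
          by (simp add: hit_eq nn_integral_cmult mult.assoc hs_def)
      qed
      also have "\<dots> = (\<integral>\<^sup>+ z. ennreal r * (\<Sum>n<N. ennreal (r^n) * ?h n z) \<partial>measure_pmf (P X))"
        by (simp add: nn_integral_sum sum_distrib_left)
      also have "\<dots> \<le> (\<integral>\<^sup>+ z. ennreal r * ennreal (exp (s * real_of_int (fst z))) \<partial>measure_pmf (P X))"
      proof (rule nn_integral_mono_AE)
        show "AE z in measure_pmf (P X). ennreal r * (\<Sum>n<N. ennreal (r^n) * ?h n z) \<le> ennreal r * ennreal (exp (s * real_of_int (fst z)))"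
          unfolding AE_measure_pmf_iff
        proof
          fix z assume "z \<in> set_pmf (P X)"
          then have "0 \<le> fst z" using suppX by blast
          from c1[OF this] show "ennreal r * (\<Sum>n<N. ennreal (r^n) * ?h n z) \<le> ennreal r * ennreal (exp (s * real_of_int (fst z)))"
            by (rule mult_left_mono) simp
        qed
      qed
      also have "\<dots> = ennreal r * (\<integral>\<^sup>+ z. ennreal (exp (s * real_of_int (fst z))) \<partial>measure_pmf (P X))"
        by (simp add: nn_integral_cmult)
      also have "\<dots> \<le> ennreal r * (ennreal (exp (s * real i)) * ennreal (1 + E0))"
        by (intro mult_left_mono FX) simp
      also have "\<dots> = ennreal (r * ((1 + E0) * exp (s * real i)))"
        using r E0 by (simp add: ennreal_mult mult_ac)
      finally show "(\<Sum>n<N. ennreal (exp (\<delta> * real (Suc n))) * ennreal (hit_prob P A (Suc n) X))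
          \<le> ennreal (r * ((1 + E0) * exp (s * real i)))" .
    qed
    define f where "f = (\<lambda>n. measure_pmf.prob (traj P n X) {p. \<forall>m\<in>{1..n}. p ! m \<notin> A})"
    have fbound: "f (Suc N) \<le> \<rho> ^ N * ((1 + E0) * exp (s * real i))" for N
    proof -
      let ?v = "\<lambda>z. emeasure (measure_pmf (traj P N z)) (ss A N)"
      have "ennreal (f (Suc N)) = (\<integral>\<^sup>+ z. ?v z \<partial>measure_pmf (P X))"
        unfolding f_def by (rule esc_eq)
      also have "\<dots> \<le> (\<integral>\<^sup>+ z. ennreal (\<rho> ^ N) * ennreal (exp (s * real_of_int (fst z))) \<partial>measure_pmf (P X))"
      proof (rule nn_integral_mono_AE)
        show "AE z in measure_pmf (P X). ?v z \<le> ennreal (\<rho> ^ N) * ennreal (exp (s * real_of_int (fst z)))"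
          unfolding AE_measure_pmf_iff
        proof
          fix z assume "z \<in> set_pmf (P X)"
          then have "0 \<le> fst z" using suppX by blast
          from c2[OF this] have "ennreal (\<rho> ^ N) * (ennreal (r ^ N) * ?v z) \<le> ennreal (\<rho> ^ N) * ennreal (exp (s * real_of_int (fst z)))"
            by (rule mult_left_mono) simp
          moreover have "ennreal (\<rho> ^ N) * (ennreal (r ^ N) * ?v z) = ?v z"
          proof -
            have "ennreal (\<rho> ^ N) * ennreal (r ^ N) = ennreal (\<rho> ^ N * r ^ N)"
              using r \<rho> by (simp add: ennreal_mult)
            also have "\<rho> ^ N * r ^ N = (r * \<rho>) ^ N" by (simp add: power_mult_distrib mult.commute)
            also have "\<dots> = 1" using r by simp
            finally have "ennreal (\<rho> ^ N) * ennreal (r ^ N) = 1" by simp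
            then show ?thesis by (simp add: mult.assoc[symmetric])
          qed
          ultimately show "?v z \<le> ennreal (\<rho> ^ N) * ennreal (exp (s * real_of_int (fst z)))" by simp
        qed
      qed
      also have "\<dots> = ennreal (\<rho> ^ N) * (\<integral>\<^sup>+ z. ennreal (exp (s * real_of_int (fst z))) \<partial>measure_pmf (P X))"
        by (simp add: nn_integral_cmult)
      also have "\<dots> \<le> ennreal (\<rho> ^ N) * (ennreal (exp (s * real i)) * ennreal (1 + E0))"
        by (intro mult_left_mono FX) simp
      also have "\<dots> = ennreal (\<rho> ^ N * ((1 + E0) * exp (s * real i)))"
        using \<rho> E0 by (simp add: ennreal_mult mult_ac)
      finally show ?thesis using \<rho> e_pos by (subst (asm) ennreal_le_iff) auto
    qed
    have f0: "0 \<le> f n" for n by (simp add: f_def)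
    have esc: "escape_prob P A X = 0"
    proof -
      have e: "escape_prob P A X = (INF n. f n)" by (simp add: escape_prob_def f_def)
      have bdd: "bdd_below (range f)" using f0 by (intro bdd_belowI[of _ 0]) auto
      have "0 \<le> (INF n. f n)" using f0 by (intro cINF_greatest) auto
      moreover have "(INF n. f n) \<le> 0"
      proof (rule LIMSEQ_le_const)
        show "(\<lambda>N. \<rho> ^ N * ((1 + E0) * exp (s * real i))) \<longlonglongrightarrow> 0"
          using \<rho> by (intro tendsto_mult_left_zero LIMSEQ_power_zero) simp
        show "\<exists>M. \<forall>N\<ge>M. (INF n. f n) \<le> \<rho> ^ N * ((1 + E0) * exp (s * real i))"
          using cINF_lower[OF bdd, of "Suc _"] fbound by (meson UNIV_I order_trans)
      qed
      ultimately show ?thesis using e by simp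
    qed
    have "exp_moment_hit P A \<delta> X
        = (\<Sum>n. ennreal (exp (\<delta> * real (Suc n))) * ennreal (hit_prob P A (Suc n) X))"
      by (simp add: exp_moment_hit_def esc)
    also have "\<dots> \<le> ennreal (r * ((1 + E0) * exp (s * real i)))" by (rule sum)
    also have "\<dots> \<le> ennreal (C * exp (\<theta> * real i))"
    proof (rule ennreal_leI)
      have "exp (s * real i) \<le> exp (\<theta> * real i)" using s by (simp add: mult_right_mono)
      then show "r * ((1 + E0) * exp (s * real i)) \<le> C * exp (\<theta> * real i)"
        using r E0 by (simp add: C_def mult_left_mono)
    qed
    finally show ?thesis by (simp add: P_def A_def X_def)
  qed
  show "\<exists>C>0. \<exists>\<delta>>0. \<forall>(i::nat) (j::int) (k::nat).
           exp_moment_hit (stepZ1 k0 \<mu> \<mu>'') {x. fst x \<le> max (int k0 - 1) (int k)} \<delta> (int i, j)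
             \<le> ennreal (C * exp (\<theta> * real i))"
    using main C \<delta> by blast
qed

end
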